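(* Consider the fixed cost inverse fractional knapsack problem (defined in the context), and let $$L=\max_{i\in I^0}\frac{p_i-\bar z_i}{c_i},\qquad U=\min_{i\in I^1}\frac{p_i+\bar z_i}{c_i},$$ where $\bar z_i=\bar u_i$ for $i\in I^1$ and $\bar z_i=\bar v_i$ for $i\in I^0$. Then the problem is feasible (i.e., there exists a feasible modification making $x^*$ optimal) if and only if $L\le U$.
   Context: Given positive integers $p_i,c_i$ ($i=1,\dots,n$), a budget $b$, and a vector $x^*\in\{0,1\}^n$ with $\sum_{i=1}^n c_i x^*_i=b$. Let $I^1=\{i:x^*_i=1\}$ and $I^0=\{i:x^*_i=0\}$. Given nonnegative integer bounds $\bar u_i,\bar v_i$. A feasible modification is $(u,v)$ with $u_i\in[0,\bar u_i]\cap\mathbb Z$, $v_i\in[0,\bar v_i]\cap\mathbb Z$, giving modified profits $\tilde p_i=p_i+u_i-v_i$; the costs $c_i$ are fixed. The fixed cost inverse fractional knapsack problem asks for a feasible modification such that $x^*$ is an optimal solution of $\max\{\sum_i\tilde p_i x_i:\sum_i c_ix_i\le b,\ x_i\in[0,1]\}$, minimizing a nondecreasing cost of the modification. *)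

theory Defs
  imports Main "HOL-Library.Extended_Real"
begin

definition frac_feasible :: "nat \<Rightarrow> (nat \<Rightarrow> int) \<Rightarrow> int \<Rightarrow> (nat \<Rightarrow> real) \<Rightarrow> bool" where
  "frac_feasible n c b x \<longleftrightarrow>
     (\<forall>i\<in>{1..n}. 0 \<le> x i \<and> x i \<le> 1) \<and> (\<Sum>i=1..n. real_of_int (c i) * x i) \<le> real_of_int b"

definition frac_optimal :: "nat \<Rightarrow> (nat \<Rightarrow> int) \<Rightarrow> (nat \<Rightarrow> int) \<Rightarrow> int \<Rightarrow> (nat \<Rightarrow> real) \<Rightarrow> bool" where
  "frac_optimal n pt c b x \<longleftrightarrow> frac_feasible n c b x \<and>
     (\<forall>y. frac_feasible n c b y \<longrightarrow>
        (\<Sum>i=1..n. real_of_int (pt i) * y i) \<le> (\<Sum>i=1..n. real_of_int (pt i) * x i))"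

definition feasible_modification :: "nat \<Rightarrow> (nat \<Rightarrow> int) \<Rightarrow> (nat \<Rightarrow> int) \<Rightarrow> (nat \<Rightarrow> int) \<Rightarrow> (nat \<Rightarrow> int) \<Rightarrow> bool" where
  "feasible_modification n ubar vbar u v \<longleftrightarrow>
     (\<forall>i\<in>{1..n}. 0 \<le> u i \<and> u i \<le> ubar i \<and> 0 \<le> v i \<and> v i \<le> vbar i)"

definition inverse_fk_feasible ::
  "nat \<Rightarrow> (nat \<Rightarrow> int) \<Rightarrow> (nat \<Rightarrow> int) \<Rightarrow> int \<Rightarrow> (nat \<Rightarrow> int) \<Rightarrow> (nat \<Rightarrow> int) \<Rightarrow> (nat \<Rightarrow> int) \<Rightarrow> bool" where
  "inverse_fk_feasible n p c b xstar ubar vbar \<longleftrightarrow>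
     (\<exists>u v. feasible_modification n ubar vbar u v \<and>
        frac_optimal n (\<lambda>i. p i + u i - v i) c b (\<lambda>i. real_of_int (xstar i)))"

definition I1 :: "nat \<Rightarrow> (nat \<Rightarrow> int) \<Rightarrow> nat set" where
  "I1 n xstar = {i\<in>{1..n}. xstar i = 1}"

definition I0 :: "nat \<Rightarrow> (nat \<Rightarrow> int) \<Rightarrow> nat set" where
  "I0 n xstar = {i\<in>{1..n}. xstar i = 0}"

text \<open>L = max over I0 of (p_i - vbar_i)/c_i, U = min over I1 of (p_i + ubar_i)/c_i,
  taken in the extended reals (max over the empty set is -infinity, min is +infinity).\<close>
definition lowerL :: "nat \<Rightarrow> (nat \<Rightarrow> int) \<Rightarrow> (nat \<Rightarrow> int) \<Rightarrow> (nat \<Rightarrow> int) \<Rightarrow> (nat \<Rightarrow> int) \<Rightarrow> ereal" where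
  "lowerL n p c xstar vbar =
     (SUP i\<in>I0 n xstar. ereal (real_of_int (p i - vbar i) / real_of_int (c i)))"

definition upperU :: "nat \<Rightarrow> (nat \<Rightarrow> int) \<Rightarrow> (nat \<Rightarrow> int) \<Rightarrow> (nat \<Rightarrow> int) \<Rightarrow> (nat \<Rightarrow> int) \<Rightarrow> ereal" where
  "upperU n p c xstar ubar =
     (INF i\<in>I1 n xstar. ereal (real_of_int (p i + ubar i) / real_of_int (c i)))"

end

theory Submission
  imports Defs
begin

lemma aux_frac:
  fixes P Q C D :: real assumes "C + D > 0"
  shows "P * (D / (C + D)) + Q * (D / (C + D) - 1) = (P * D - Q * C) / (C + D)"
proof -
  have "D / (C + D) - 1 = - C / (C + D)" using assms by (simp add: field_simps)
  thus ?thesis by (simp add: add_divide_distrib diff_divide_distrib)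
qed

lemma pair_ineq:
  fixes n :: nat and pt c xstar :: "nat \<Rightarrow> int" and b :: int and i j :: nat
  assumes pos: "\<forall>k\<in>{1..n}. c k > 0"
    and b: "(\<Sum>k=1..n. real_of_int (c k) * real_of_int (xstar k)) = real_of_int b"
    and opt: "frac_optimal n pt c b (\<lambda>k. real_of_int (xstar k))"
    and i: "i \<in> {1..n}" "xstar i = 0" and j: "j \<in> {1..n}" "xstar j = 1"
  shows "real_of_int (pt i) * real_of_int (c j) \<le> real_of_int (pt j) * real_of_int (c i)"
proof -
  have ij: "i \<noteq> j" using i j by auto
  define s where "s = real_of_int (c i) + real_of_int (c j)"
  have ci: "real_of_int (c i) > 0" and cj: "real_of_int (c j) > 0" using pos i j by auto
  have s: "s > 0" using ci cj s_def by auto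
  define a where "a = real_of_int (c j) / s"
  have a0: "0 \<le> a" and a1: "a \<le> 1" using ci cj s unfolding a_def s_def by (auto simp: field_simps)
  define y where "y k = real_of_int (xstar k) + (if k = i then a else 0) + (if k = j then a - 1 else 0)" for k
  have sumy: "(\<Sum>k=1..n. real_of_int (f k) * y k) = (\<Sum>k=1..n. real_of_int (f k) * real_of_int (xstar k))
      + real_of_int (f i) * a + real_of_int (f j) * (a - 1)" for f :: "nat \<Rightarrow> int"
  proof -
    have "(\<Sum>k=1..n. real_of_int (f k) * y k) = (\<Sum>k=1..n. real_of_int (f k) * real_of_int (xstar k))
      + (\<Sum>k=1..n. (if k = i then real_of_int (f k) * a else 0)) + (\<Sum>k=1..n. (if k = j then real_of_int (f k) * (a - 1) else 0))"
      unfolding y_def sum.distrib[symmetric]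
      by (intro sum.cong) (auto simp: algebra_simps)
    also have "\<dots> = (\<Sum>k=1..n. real_of_int (f k) * real_of_int (xstar k))
      + real_of_int (f i) * a + real_of_int (f j) * (a - 1)"
      using i j by (simp add: sum.delta)
    finally show ?thesis .
  qed
  have "real_of_int (c i) * a + real_of_int (c j) * (a - 1) = 0"
    using s unfolding a_def s_def by (simp add: field_simps)
  hence "(\<Sum>k=1..n. real_of_int (c k) * y k) = real_of_int b" using sumy[of c] b by simp
  moreover have "\<forall>k\<in>{1..n}. 0 \<le> y k \<and> y k \<le> 1"
  proof
    fix k assume k: "k \<in> {1..n}"
    show "0 \<le> y k \<and> y k \<le> 1"
    proof (cases "k = i \<or> k = j")
      case True thus ?thesis using i j ij a0 a1 unfolding y_def by auto
    next
      case False
      then have "y k = real_of_int (xstar k)" unfolding y_def by auto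
      moreover have "0 \<le> xstar k \<and> xstar k \<le> 1" using opt k unfolding frac_optimal_def frac_feasible_def by auto
      hence "xstar k \<in> {0,1}" by auto
      ultimately show ?thesis by auto
    qed
  qed
  ultimately have "frac_feasible n c b y" unfolding frac_feasible_def by auto
  hence "(\<Sum>k=1..n. real_of_int (pt k) * y k) \<le> (\<Sum>k=1..n. real_of_int (pt k) * real_of_int (xstar k))"
    using opt unfolding frac_optimal_def by auto
  hence "real_of_int (pt i) * a + real_of_int (pt j) * (a - 1) \<le> 0" using sumy[of pt] by simp
  moreover have "real_of_int (pt i) * a + real_of_int (pt j) * (a - 1)
     = (real_of_int (pt i) * real_of_int (c j) - real_of_int (pt j) * real_of_int (c i)) / s"
    using s unfolding a_def s_def by (rule aux_frac)
  ultimately have "(real_of_int (pt i) * real_of_int (c j) - real_of_int (pt j) * real_of_int (c i)) / s \<le> 0" by simp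
  hence "real_of_int (pt i) * real_of_int (c j) - real_of_int (pt j) * real_of_int (c i) \<le> 0"
    using s by (simp add: divide_le_0_iff)
  thus ?thesis by simp
qed

theorem mainTheorem3:
  fixes n :: nat and p c ubar vbar xstar :: "nat \<Rightarrow> int" and b :: int
  assumes "\<forall>i\<in>{1..n}. p i > 0 \<and> c i > 0"
    and "\<forall>i\<in>{1..n}. xstar i \<in> {0, 1}"
    and "(\<Sum>i=1..n. c i * xstar i) = b"
    and "\<forall>i\<in>{1..n}. ubar i \<ge> 0 \<and> vbar i \<ge> 0"
  shows "inverse_fk_feasible n p c b xstar ubar vbar \<longleftrightarrow>
         lowerL n p c xstar vbar \<le> upperU n p c xstar ubar"
proof -
  have breal: "(\<Sum>k=1..n. real_of_int (c k) * real_of_int (xstar k)) = real_of_int b"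
    using arg_cong[OF assms(3), of real_of_int] by simp
  have pos: "\<forall>k\<in>{1..n}. c k > 0" using assms(1) by auto
  define f where "f i = real_of_int (p i - vbar i) / real_of_int (c i)" for i
  define g where "g i = real_of_int (p i + ubar i) / real_of_int (c i)" for i
  have LU: "lowerL n p c xstar vbar \<le> upperU n p c xstar ubar \<longleftrightarrow>
     (\<forall>i\<in>I0 n xstar. \<forall>j\<in>I1 n xstar. f i \<le> g j)"
  proof
    assume h: "lowerL n p c xstar vbar \<le> upperU n p c xstar ubar"
    show "\<forall>i\<in>I0 n xstar. \<forall>j\<in>I1 n xstar. f i \<le> g j"
    proof (intro ballI)
      fix i j assume i: "i \<in> I0 n xstar" and j: "j \<in> I1 n xstar"
      have "ereal (f i) \<le> lowerL n p c xstar vbar" unfolding lowerL_def f_def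
        using i by (rule SUP_upper)
      also note h
      also have "upperU n p c xstar ubar \<le> ereal (g j)" unfolding upperU_def g_def
        using j by (rule INF_lower)
      finally show "f i \<le> g j" by simp
    qed
  next
    assume h: "\<forall>i\<in>I0 n xstar. \<forall>j\<in>I1 n xstar. f i \<le> g j"
    show "lowerL n p c xstar vbar \<le> upperU n p c xstar ubar"
      unfolding lowerL_def upperU_def
    proof (rule SUP_least)
      fix i assume i: "i \<in> I0 n xstar"
      show "ereal (real_of_int (p i - vbar i) / real_of_int (c i)) \<le> (INF j\<in>I1 n xstar. ereal (real_of_int (p j + ubar j) / real_of_int (c j)))"
        by (rule INF_greatest) (use h i in \<open>auto simp: f_def g_def\<close>)
    qed
  qed
  show ?thesis
  proof
    assume "inverse_fk_feasible n p c b xstar ubar vbar"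
    then obtain u v where fm: "feasible_modification n ubar vbar u v"
      and opt: "frac_optimal n (\<lambda>i. p i + u i - v i) c b (\<lambda>i. real_of_int (xstar i))"
      unfolding inverse_fk_feasible_def by auto
    have "\<forall>i\<in>I0 n xstar. \<forall>j\<in>I1 n xstar. f i \<le> g j"
    proof (intro ballI)
      fix i j assume i: "i \<in> I0 n xstar" and j: "j \<in> I1 n xstar"
      have i': "i \<in> {1..n}" "xstar i = 0" and j': "j \<in> {1..n}" "xstar j = 1"
        using i j unfolding I0_def I1_def by auto
      have ci: "real_of_int (c i) > 0" and cj: "real_of_int (c j) > 0" using pos i' j' by auto
      have key: "real_of_int (p i + u i - v i) * real_of_int (c j) \<le> real_of_int (p j + u j - v j) * real_of_int (c i)"
        using pair_ineq[OF pos breal opt i' j'] by simp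
      have "f i \<le> real_of_int (p i + u i - v i) / real_of_int (c i)"
        unfolding f_def using fm i' ci by (intro divide_right_mono) (auto simp: feasible_modification_def dest!: bspec[where x=i])
      also have "\<dots> \<le> real_of_int (p j + u j - v j) / real_of_int (c j)"
        using key ci cj by (simp add: divide_simps)
      also have "\<dots> \<le> g j"
        unfolding g_def using fm j' cj by (intro divide_right_mono) (auto simp: feasible_modification_def dest!: bspec[where x=j])
      finally show "f i \<le> g j" .
    qed
    thus "lowerL n p c xstar vbar \<le> upperU n p c xstar ubar" using LU by simp
  next
    assume "lowerL n p c xstar vbar \<le> upperU n p c xstar ubar"
    hence h: "\<forall>i\<in>I0 n xstar. \<forall>j\<in>I1 n xstar. f i \<le> g j" using LU by simp
    define u where "u i = (if xstar i = 1 then ubar i else 0)" for i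
    define v where "v i = (if xstar i = 0 then vbar i else 0)" for i
    define pt where "pt i = p i + u i - v i" for i
    define r where "r i = real_of_int (pt i) / real_of_int (c i)" for i
    define lam where "lam = Max (insert 0 (r ` I0 n xstar))"
    have finI0: "finite (I0 n xstar)" unfolding I0_def by auto
    have lam0: "0 \<le> lam" unfolding lam_def using finI0 by auto
    have lamI0: "r i \<le> lam" if "i \<in> I0 n xstar" for i
      unfolding lam_def using finI0 that by auto
    have lamI1: "lam \<le> r j" if j: "j \<in> I1 n xstar" for j
    proof -
      have j': "j \<in> {1..n}" "xstar j = 1" using j unfolding I1_def by auto
      have "0 \<le> r j" proof -
        have "p j > 0" "c j > 0" "ubar j \<ge> 0" using assms(1,4) j' by auto
        thus ?thesis unfolding r_def pt_def u_def v_def using j' by simp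
      qed
      moreover have "r i \<le> r j" if i: "i \<in> I0 n xstar" for i
      proof -
        have i': "i \<in> {1..n}" "xstar i = 0" using i unfolding I0_def by auto
        have "r i = f i" unfolding r_def f_def pt_def u_def v_def using i' by simp
        moreover have "r j = g j" unfolding r_def g_def pt_def u_def v_def using j' by simp
        ultimately show ?thesis using h i j by auto
      qed
      ultimately show ?thesis unfolding lam_def using finI0 by auto
    qed
    have "frac_optimal n pt c b (\<lambda>i. real_of_int (xstar i))"
      unfolding frac_optimal_def
    proof (intro conjI allI impI)
      show "frac_feasible n c b (\<lambda>i. real_of_int (xstar i))"
        unfolding frac_feasible_def using assms(2) breal by auto
    next
      fix y assume fy: "frac_feasible n c b y"
      have termk: "real_of_int (pt k) * (real_of_int (xstar k) - y k) \<ge> lam * (real_of_int (c k) * (real_of_int (xstar k) - y k))"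
        if k: "k \<in> {1..n}" for k
      proof -
        have ck: "real_of_int (c k) > 0" using pos k by auto
        have pk: "real_of_int (pt k) = r k * real_of_int (c k)" unfolding r_def using ck by simp
        have y01: "0 \<le> y k" "y k \<le> 1" using fy k unfolding frac_feasible_def by auto
        show ?thesis
        proof (cases "xstar k = 0")
          case True
          hence "k \<in> I0 n xstar" using k unfolding I0_def by auto
          hence "r k \<le> lam" by (rule lamI0)
          hence "r k * (real_of_int (c k) * y k) \<le> lam * (real_of_int (c k) * y k)"
            using ck y01 by (intro mult_right_mono) auto
          thus ?thesis using True pk by (simp add: algebra_simps)
        next
          case False
          hence "xstar k = 1" using assms(2) k by auto
          hence kk: "k \<in> I1 n xstar" "xstar k = 1" using k unfolding I1_def by auto
          hence "lam \<le> r k" by (intro lamI1) auto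
          hence "lam * (real_of_int (c k) * (1 - y k)) \<le> r k * (real_of_int (c k) * (1 - y k))"
            using ck y01 by (intro mult_right_mono) auto
          thus ?thesis using kk pk by (simp add: algebra_simps)
        qed
      qed
      have "lam * (real_of_int b - (\<Sum>k=1..n. real_of_int (c k) * y k)) \<ge> 0"
        using lam0 fy unfolding frac_feasible_def by auto
      also have "lam * (real_of_int b - (\<Sum>k=1..n. real_of_int (c k) * y k))
          = (\<Sum>k=1..n. lam * (real_of_int (c k) * (real_of_int (xstar k) - y k)))"
        unfolding breal[symmetric] sum_subtractf[symmetric] sum_distrib_left by (simp add: algebra_simps)
      also have "\<dots> \<le> (\<Sum>k=1..n. real_of_int (pt k) * (real_of_int (xstar k) - y k))"
        using termk by (intro sum_mono) auto
      also have "\<dots> = (\<Sum>k=1..n. real_of_int (pt k) * real_of_int (xstar k)) - (\<Sum>k=1..n. real_of_int (pt k) * y k)"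
        by (simp add: sum_subtractf algebra_simps)
      finally show "(\<Sum>k=1..n. real_of_int (pt k) * y k) \<le> (\<Sum>k=1..n. real_of_int (pt k) * real_of_int (xstar k))"
        by simp
    qed
    moreover have "feasible_modification n ubar vbar u v"
      unfolding feasible_modification_def u_def v_def using assms(4) by auto
    ultimately show "inverse_fk_feasible n p c b xstar ubar vbar"
      unfolding inverse_fk_feasible_def pt_def by blast
  qed
qed

end
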